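(* Let $A$ be a finite abelian group of even order, let $T$ be a square-free subset of $A$, and let $X\subseteq A$ be inverse-closed (i.e. $-X=X$). Then $X$ is a perfect code of $\mathrm{CayS}(A,T)$ if and only if $A=X\oplus T^0$, where $T^0=T\cup\{0\}$.
   Context: $A$ is written additively with identity $0$. An element $x$ of $A$ is a square if $x=2y$ for some $y\in A$; a subset is square-free if it contains no squares. For a square-free $T\subseteq A$, the Cayley sum graph $\mathrm{CayS}(A,T)$ is the simple graph with vertex set $A$ in which distinct $x,y$ are adjacent iff $x+y\in T$. A subset $C$ of the vertex set of a graph is a perfect code if every vertex is at distance at most one from exactly one vertex of $C$. For subsets $M,N\subseteq A$, we write $A=M\oplus N$ if every element $a\in A$ can be written in a unique way as $a=m+n$ with $m\in M$, $n\in N$. *)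

theory Defs
  imports Main
begin

definition is_square :: "'a::ab_group_add \<Rightarrow> bool" where
  "is_square x \<longleftrightarrow> (\<exists>y. x = y + y)"

definition square_free :: "'a::ab_group_add set \<Rightarrow> bool" where
  "square_free T \<longleftrightarrow> (\<forall>x\<in>T. \<not> is_square x)"

definition cays_adj :: "'a::ab_group_add set \<Rightarrow> 'a \<Rightarrow> 'a \<Rightarrow> bool" where
  "cays_adj T x y \<longleftrightarrow> x \<noteq> y \<and> x + y \<in> T"

definition perfect_code :: "'v set \<Rightarrow> ('v \<Rightarrow> 'v \<Rightarrow> bool) \<Rightarrow> 'v set \<Rightarrow> bool" where
  "perfect_code V E C \<longleftrightarrow> C \<subseteq> V \<and> (\<forall>v\<in>V. \<exists>!c. c \<in> C \<and> (v = c \<or> E v c))"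

definition direct_sum :: "'a::ab_group_add set \<Rightarrow> 'a set \<Rightarrow> 'a set \<Rightarrow> bool" where
  "direct_sum A M N \<longleftrightarrow> (\<forall>a\<in>A. \<exists>!p. fst p \<in> M \<and> snd p \<in> N \<and> a = fst p + snd p)"

end

theory Submission
  imports Defs
begin

lemma ex1_card: "finite {c. P c} \<Longrightarrow> (\<exists>!c. P c) \<longleftrightarrow> card {c. P c} = 1"
proof -
  have "(\<exists>!c. P c) \<longleftrightarrow> (\<exists>x. {c. P c} = {x})"
    by (auto simp: set_eq_iff)
  then show ?thesis by (simp add: card_1_singleton_iff)
qed

theorem corollary2p6:
  fixes T X :: "'a::{ab_group_add, finite} set"
  assumes "even (card (UNIV :: 'a set))"
    and "square_free T"
    and "uminus ` X = X"
  shows "perfect_code UNIV (cays_adj T) X \<longleftrightarrow> direct_sum UNIV X (insert 0 T)"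
proof -
  have XX: "x \<in> X \<longleftrightarrow> - x \<in> X" for x
    using assms(3) by (metis image_iff minus_minus)
  have sq: "y + y \<notin> T" for y using assms(2) unfolding square_free_def is_square_def by blast
  have z: "0 \<notin> T" using sq[of 0] by simp
  define R where "R v = {c\<in>X. v + c \<in> T}" for v
  have c1: "card {c. c\<in>X \<and> (v = c \<or> cays_adj T v c)} = card {c. c\<in>X \<and> (v + c = 0 \<or> v + c \<in> T)}" for v
  proof -
    have e1: "{c. c\<in>X \<and> (v = c \<or> cays_adj T v c)} = (if v \<in> X then {v} else {}) \<union> R v"
      unfolding R_def cays_adj_def using sq by auto
    have e2: "{c. c\<in>X \<and> (v + c = 0 \<or> v + c \<in> T)} = (if v \<in> X then {-v} else {}) \<union> R v"
      unfolding R_def using XX z by (auto simp: add_eq_0_iff)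
    have n1: "v \<notin> R v" unfolding R_def using sq by auto
    have n2: "-v \<notin> R v" unfolding R_def using z by auto
    show ?thesis unfolding e1 e2 using n1 n2 by (simp add: card_insert_if)
  qed
  have pc: "perfect_code UNIV (cays_adj T) X \<longleftrightarrow> (\<forall>v. card {c. c\<in>X \<and> (v = c \<or> cays_adj T v c)} = 1)"
    unfolding perfect_code_def by (simp add: ex1_card)
  have ds1: "(\<exists>!p. fst p \<in> X \<and> snd p \<in> insert 0 T \<and> v = fst p + snd p) \<longleftrightarrow>
      (\<exists>!c. c\<in>X \<and> (v + c = 0 \<or> v + c \<in> T))" for v
  proof
    assume "\<exists>!p. fst p \<in> X \<and> snd p \<in> insert 0 T \<and> v = fst p + snd p"
    then obtain p where p: "fst p \<in> X \<and> snd p \<in> insert 0 T \<and> v = fst p + snd p"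
      and u: "\<And>q. fst q \<in> X \<and> snd q \<in> insert 0 T \<and> v = fst q + snd q \<Longrightarrow> q = p" by blast
    show "\<exists>!c. c\<in>X \<and> (v + c = 0 \<or> v + c \<in> T)"
    proof (rule ex1I[of _ "- fst p"])
      show "- fst p \<in> X \<and> (v + - fst p = 0 \<or> v + - fst p \<in> T)"
        using p XX by (auto simp: algebra_simps)
    next
      fix c assume c: "c \<in> X \<and> (v + c = 0 \<or> v + c \<in> T)"
      have "(-c, v + c) = p" apply (rule u) using c XX by (auto simp: algebra_simps)
      then show "c = - fst p" by auto
    qed
  next
    assume "\<exists>!c. c\<in>X \<and> (v + c = 0 \<or> v + c \<in> T)"
    then obtain c where c: "c\<in>X \<and> (v + c = 0 \<or> v + c \<in> T)"
      and u: "\<And>d. d\<in>X \<and> (v + d = 0 \<or> v + d \<in> T) \<Longrightarrow> d = c" by blast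
    show "\<exists>!p. fst p \<in> X \<and> snd p \<in> insert 0 T \<and> v = fst p + snd p"
    proof (rule ex1I[of _ "(-c, v + c)"])
      show "fst (-c, v + c) \<in> X \<and> snd (-c, v + c) \<in> insert 0 T \<and> v = fst (-c, v + c) + snd (-c, v + c)"
        using c XX by auto
    next
      fix q assume q: "fst q \<in> X \<and> snd q \<in> insert 0 T \<and> v = fst q + snd q"
      have "- fst q = c" apply (rule u) using q XX by (auto simp: algebra_simps)
      then show "q = (-c, v + c)" using q by (cases q) (auto simp: algebra_simps)
    qed
  qed
  have ds: "direct_sum UNIV X (insert 0 T) \<longleftrightarrow> (\<forall>v. card {c. c\<in>X \<and> (v + c = 0 \<or> v + c \<in> T)} = 1)"
    unfolding direct_sum_def using ds1 by (simp add: ex1_card)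
  show ?thesis using pc ds c1 by simp
qed

end
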